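(* Let $\otimes$ and $\oplus$ be uninorms on $[0,1]$. Then $(\otimes,\oplus)$ satisfies the rearrangement inequality if and only if for all $0\leq x_1\leq x_2\leq 1$ and $0\leq y_1\leq y_2\leq 1$, $$(x_1\otimes y_1)\oplus (x_2\otimes y_2) \geq (x_1\otimes y_2)\oplus (x_2\otimes y_1).$$ Moreover, $(\otimes,\oplus)$ satisfies the dual rearrangement inequality if and only if for all $0\leq x_1\leq x_2\leq 1$ and $0\leq y_1\leq y_2\leq 1$, $$(x_1\oplus y_1)\otimes (x_2\oplus y_2) \leq (x_1\oplus y_2)\otimes (x_2\oplus y_1).$$
   Context: A uninorm is a function $\otimes:[0,1]^2\to[0,1]$ that is commutative, associative, monotonic (for all $x,y,z\in[0,1]$, $x\leq y$ implies $x\otimes z\leq y\otimes z$), and has an identity element $e\in[0,1]$ (i.e. $x\otimes e=x$ for all $x\in[0,1]$). For uninorms $\otimes,\oplus$, the pair $(\otimes,\oplus)$ satisfies the rearrangement inequality if for every $n\geq 1$, all $0\leq x_1\leq\cdots\leq x_n\leq 1$, $0\leq y_1\leq\cdots\leq y_n\leq 1$ and every permutation $\sigma$ of $\{1,\dots,n\}$, $$(x_n\otimes y_1)\oplus\cdots\oplus(x_1\otimes y_n)\leq (x_{\sigma(1)}\otimes y_1)\oplus\cdots\oplus(x_{\sigma(n)}\otimes y_n)\leq (x_1\otimes y_1)\oplus\cdots\oplus(x_n\otimes y_n).$$ It satisfies the dual rearrangement inequality if for all such $n$, $x_i$, $y_i$, $\sigma$, $$(x_n\oplus y_1)\otimes\cdots\otimes(x_1\oplus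 y_n)\geq (x_{\sigma(1)}\oplus y_1)\otimes\cdots\otimes(x_{\sigma(n)}\oplus y_n)\geq (x_1\oplus y_1)\otimes\cdots\otimes(x_n\oplus y_n).$$ (Iterated operations are well defined by associativity; the term $x_n\otimes y_1,\dots,x_1\otimes y_n$ means $x_{n+1-i}\otimes y_i$.) *)

theory Defs
  imports Complex_Main "HOL-Combinatorics.Permutations"
begin

text \<open>A uninorm on [0,1], represented as a real binary function whose behaviour
  on [0,1]^2 is what matters.\<close>
definition uninorm :: "(real \<Rightarrow> real \<Rightarrow> real) \<Rightarrow> bool" where
  "uninorm U \<longleftrightarrow>
     (\<forall>x\<in>{0..1}. \<forall>y\<in>{0..1}. U x y \<in> {0..1}) \<and>
     (\<forall>x\<in>{0..1}. \<forall>y\<in>{0..1}. U x y = U y x) \<and>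
     (\<forall>x\<in>{0..1}. \<forall>y\<in>{0..1}. \<forall>z\<in>{0..1}. U (U x y) z = U x (U y z)) \<and>
     (\<forall>x\<in>{0..1}. \<forall>y\<in>{0..1}. \<forall>z\<in>{0..1}. x \<le> y \<longrightarrow> U x z \<le> U y z) \<and>
     (\<exists>e\<in>{0..1}. \<forall>x\<in>{0..1}. U x e = x)"

definition iter_op :: "(real \<Rightarrow> real \<Rightarrow> real) \<Rightarrow> (nat \<Rightarrow> real) \<Rightarrow> nat \<Rightarrow> real" where
  "iter_op U a n = foldl (\<lambda>acc i. U acc (a i)) (a 1) [2..<Suc n]"

definition rearrangement_ineq ::
  "(real \<Rightarrow> real \<Rightarrow> real) \<Rightarrow> (real \<Rightarrow> real \<Rightarrow> real) \<Rightarrow> bool" where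
  "rearrangement_ineq T S \<longleftrightarrow>
    (\<forall>n::nat. \<forall>x y :: nat \<Rightarrow> real. \<forall>\<sigma>.
       n \<ge> 1 \<longrightarrow>
       (\<forall>i\<in>{1..n}. 0 \<le> x i \<and> x i \<le> 1 \<and> 0 \<le> y i \<and> y i \<le> 1) \<longrightarrow>
       (\<forall>i\<in>{1..n}. \<forall>j\<in>{1..n}. i \<le> j \<longrightarrow> x i \<le> x j \<and> y i \<le> y j) \<longrightarrow>
       \<sigma> permutes {1..n} \<longrightarrow>
       iter_op S (\<lambda>i. T (x (n + 1 - i)) (y i)) n
         \<le> iter_op S (\<lambda>i. T (x (\<sigma> i)) (y i)) n \<and>
       iter_op S (\<lambda>i. T (x (\<sigma> i)) (y i)) n
         \<le> iter_op S (\<lambda>i. T (x i) (y i)) n)"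

definition dual_rearrangement_ineq ::
  "(real \<Rightarrow> real \<Rightarrow> real) \<Rightarrow> (real \<Rightarrow> real \<Rightarrow> real) \<Rightarrow> bool" where
  "dual_rearrangement_ineq T S \<longleftrightarrow>
    (\<forall>n::nat. \<forall>x y :: nat \<Rightarrow> real. \<forall>\<sigma>.
       n \<ge> 1 \<longrightarrow>
       (\<forall>i\<in>{1..n}. 0 \<le> x i \<and> x i \<le> 1 \<and> 0 \<le> y i \<and> y i \<le> 1) \<longrightarrow>
       (\<forall>i\<in>{1..n}. \<forall>j\<in>{1..n}. i \<le> j \<longrightarrow> x i \<le> x j \<and> y i \<le> y j) \<longrightarrow>
       \<sigma> permutes {1..n} \<longrightarrow>
       iter_op T (\<lambda>i. S (x (n + 1 - i)) (y i)) n
         \<ge> iter_op T (\<lambda>i. S (x (\<sigma> i)) (y i)) n \<and>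
       iter_op T (\<lambda>i. S (x (\<sigma> i)) (y i)) n
         \<ge> iter_op T (\<lambda>i. S (x i) (y i)) n)"

end

theory Submission
  imports Defs "HOL-Library.Multiset"
begin

definition clamp :: "real \<Rightarrow> real" where "clamp t = max 0 (min 1 t)"
definition uext :: "(real \<Rightarrow> real \<Rightarrow> real) \<Rightarrow> real \<Rightarrow> real \<Rightarrow> real"
  where "uext U a b = U (clamp a) (clamp b)"

lemma clamp_in: "clamp t \<in> {0..1}" by (simp add: clamp_def)
lemma clamp_id: "t \<in> {0..1} \<Longrightarrow> clamp t = t" by (simp add: clamp_def)
lemma clamp_mono: "a \<le> b \<Longrightarrow> clamp a \<le> clamp b" by (simp add: clamp_def)

lemma un_closed: "uninorm U \<Longrightarrow> a \<in> {0..1} \<Longrightarrow> b \<in> {0..1} \<Longrightarrow> U a b \<in> {0..1}"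
  unfolding uninorm_def by blast
lemma un_comm: "uninorm U \<Longrightarrow> a \<in> {0..1} \<Longrightarrow> b \<in> {0..1} \<Longrightarrow> U a b = U b a"
  unfolding uninorm_def by blast
lemma un_assoc: "uninorm U \<Longrightarrow> a \<in> {0..1} \<Longrightarrow> b \<in> {0..1} \<Longrightarrow> c \<in> {0..1} \<Longrightarrow> U (U a b) c = U a (U b c)"
  unfolding uninorm_def by blast
lemma un_mono: "uninorm U \<Longrightarrow> a \<in> {0..1} \<Longrightarrow> b \<in> {0..1} \<Longrightarrow> c \<in> {0..1} \<Longrightarrow> a \<le> b \<Longrightarrow> U a c \<le> U b c"
  unfolding uninorm_def by blast

lemma uext_closed: "uninorm U \<Longrightarrow> uext U a b \<in> {0..1}"
  unfolding uext_def by (simp add: un_closed clamp_in del: atLeastAtMost_iff)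
lemma uext_eq: "a \<in> {0..1} \<Longrightarrow> b \<in> {0..1} \<Longrightarrow> uext U a b = U a b"
  unfolding uext_def by (simp add: clamp_id del: atLeastAtMost_iff)
lemma uext_comm: "uninorm U \<Longrightarrow> uext U a b = uext U b a"
  unfolding uext_def using un_comm clamp_in by blast
lemma uext_assoc: "uninorm U \<Longrightarrow> uext U (uext U a b) c = uext U a (uext U b c)"
proof -
  assume u: "uninorm U"
  have "uext U (uext U a b) c = U (U (clamp a) (clamp b)) (clamp c)"
    unfolding uext_def using clamp_id[OF un_closed[OF u clamp_in clamp_in]] by simp
  also have "\<dots> = U (clamp a) (U (clamp b) (clamp c))" using un_assoc[OF u clamp_in clamp_in clamp_in] .
  also have "\<dots> = uext U a (uext U b c)"
    unfolding uext_def using clamp_id[OF un_closed[OF u clamp_in clamp_in]] by simp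
  finally show ?thesis .
qed
lemma uext_mono: "uninorm U \<Longrightarrow> a \<le> b \<Longrightarrow> uext U a c \<le> uext U b c"
  unfolding uext_def by (rule un_mono) (auto intro: clamp_in clamp_mono simp del: atLeastAtMost_iff)

lemma uext_cfc: "uninorm U \<Longrightarrow> comp_fun_commute (uext U)"
  apply unfold_locales
  apply (rule ext)
  by (metis comp_apply uext_assoc uext_comm)

lemma foldl_uext:
  assumes u: "uninorm U" and "z \<in> {0..1}" and "\<forall>i\<in>set xs. f i \<in> {0..1}"
  shows "foldl (\<lambda>acc i. U acc (f i)) z xs = foldl (\<lambda>acc i. uext U acc (f i)) z xs"
  using assms(2,3)
proof (induction xs arbitrary: z)
  case Nil then show ?case by simp
next
  case (Cons a xs)
  have "U z (f a) = uext U z (f a)" using Cons.prems by (simp add: uext_eq del: atLeastAtMost_iff)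
  moreover have "uext U z (f a) \<in> {0..1}" by (rule uext_closed[OF u])
  ultimately show ?case using Cons by simp
qed

lemma foldl_mset:
  assumes u: "uninorm U"
  shows "foldl (\<lambda>acc i. uext U acc (f i)) z xs = fold_mset (uext U) z (mset (map f xs))"
proof (induction xs arbitrary: z)
  case Nil then show ?case by simp
next
  case (Cons a xs)
  interpret comp_fun_commute "uext U" by (rule uext_cfc[OF u])
  show ?case using Cons
    by (simp add: fold_mset_fun_left_comm uext_comm[OF u])
qed

lemma iter_op_mset:
  assumes u: "uninorm U" and e: "e \<in> {0..1}" "\<forall>x\<in>{0..1}. U x e = x"
    and n: "n \<ge> 1" and f: "\<forall>i\<in>{1..n}. f i \<in> {0..1}"
  shows "iter_op U f n = fold_mset (uext U) e (image_mset f (mset_set {1..n}))"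
proof -
  interpret comp_fun_commute "uext U" by (rule uext_cfc[OF u])
  have f1: "f 1 \<in> {0..1}" using f n by auto
  have "iter_op U f n = foldl (\<lambda>acc i. uext U acc (f i)) (f 1) [2..<Suc n]"
    unfolding iter_op_def using f f1 by (intro foldl_uext[OF u]) auto
  also have "\<dots> = fold_mset (uext U) (f 1) (mset (map f [2..<Suc n]))" by (rule foldl_mset[OF u])
  also have "f 1 = uext U (f 1) e" using e f1 by (simp add: uext_eq del: atLeastAtMost_iff)
  also have "fold_mset (uext U) (uext U (f 1) e) (mset (map f [2..<Suc n]))
     = fold_mset (uext U) e (add_mset (f 1) (mset (map f [2..<Suc n])))"
    by (simp add: fold_mset_fun_left_comm)
  also have "add_mset (f 1) (mset (map f [2..<Suc n])) = mset (map f (1 # [2..<Suc n]))"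
    by (simp del: mset_upt)
  also have "1 # [2..<Suc n] = [1..<Suc n]"
    using n by (simp add: upt_conv_Cons numeral_2_eq_2)
  also have "mset (map f [1..<Suc n]) = image_mset f (mset_set {1..n})"
    by (simp only: mset_map mset_upt atLeastLessThanSuc_atLeastAtMost)
  finally show ?thesis .
qed

lemma Rrefl: "R = (\<le>) \<or> R = (\<lambda>a b. b \<le> a) \<Longrightarrow> R a (a::real)" by auto
lemma Rtrans: "R = (\<le>) \<or> R = (\<lambda>a b. b \<le> a) \<Longrightarrow> R a b \<Longrightarrow> R b c \<Longrightarrow> R a (c::real)" by auto
lemma Rmono: "R = (\<le>) \<or> R = (\<lambda>a b. b \<le> a) \<Longrightarrow> uninorm U \<Longrightarrow> R a b \<Longrightarrow> R (uext U a c) (uext U b c)"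
  using uext_mono by auto

lemma exchange:
  assumes u: "uninorm U" and Rc: "R = (\<le>) \<or> R = (\<lambda>a b. b \<le> a)"
    and A: "finite A" "i \<in> A" "j \<in> A" "i \<noteq> j"
    and gh: "\<forall>k\<in>A-{i,j}. g k = h k"
    and p: "R (uext U (g i) (g j)) (uext U (h i) (h j))"
  shows "R (fold_mset (uext U) e (image_mset g (mset_set A))) (fold_mset (uext U) e (image_mset h (mset_set A)))"
proof -
  interpret comp_fun_commute "uext U" by (rule uext_cfc[OF u])
  have ms: "mset_set A = add_mset i (add_mset j (mset_set (A - {i,j})))"
    using A mset_set.remove[of A i] mset_set.remove[of "A - {i}" j]
    by (simp add: insert_commute Diff_insert2[symmetric])
  have fo: "fold_mset (uext U) e (image_mset f (mset_set A))
     = uext U (uext U (f i) (f j)) (fold_mset (uext U) e (image_mset f (mset_set (A - {i,j}))))" for f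
    unfolding ms by (simp add: uext_assoc[OF u])
  have "image_mset g (mset_set (A - {i,j})) = image_mset h (mset_set (A - {i,j}))"
    using gh A by (intro image_mset_cong) simp
  then show ?thesis unfolding fo using Rmono[OF Rc u p] by simp
qed

lemma pairlem:
  assumes u: "uninorm U" and w: "uninorm W"
    and pair: "\<forall>x1 x2 y1 y2 :: real. 0 \<le> x1 \<longrightarrow> x1 \<le> x2 \<longrightarrow> x2 \<le> 1 \<longrightarrow>
               0 \<le> y1 \<longrightarrow> y1 \<le> y2 \<longrightarrow> y2 \<le> 1 \<longrightarrow>
               R (U (W x1 y2) (W x2 y1)) (U (W x1 y1) (W x2 y2))"
    and h: "0 \<le> a" "a \<le> b" "b \<le> 1" "0 \<le> c" "c \<le> d" "d \<le> 1"
  shows "R (uext U (W b c) (W a d)) (uext U (W a c) (W b d))"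
proof -
  have i: "W b c \<in> {0..1}" "W a d \<in> {0..1}" "W a c \<in> {0..1}" "W b d \<in> {0..1}"
  proof -
    have "a \<in> {0..1}" "b \<in> {0..1}" "c \<in> {0..1}" "d \<in> {0..1}" using h by auto
    then show "W b c \<in> {0..1}" "W a d \<in> {0..1}" "W a c \<in> {0..1}" "W b d \<in> {0..1}"
      using un_closed[OF w] by blast+
  qed
  have "R (U (W a d) (W b c)) (U (W a c) (W b d))" using pair h by blast
  then show ?thesis using i un_comm[OF u i(1) i(2)] by (simp add: uext_eq del: atLeastAtMost_iff)
qed

definition VV :: "(real \<Rightarrow> real \<Rightarrow> real) \<Rightarrow> (real \<Rightarrow> real \<Rightarrow> real) \<Rightarrow> real \<Rightarrow> nat \<Rightarrow> (nat \<Rightarrow> real) \<Rightarrow> (nat \<Rightarrow> real) \<Rightarrow> (nat \<Rightarrow> nat) \<Rightarrow> real"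
  where "VV U W e n x y p = fold_mset (uext U) e (image_mset (\<lambda>k. W (x (p k)) (y k)) (mset_set {1..n}))"

lemma upper:
  assumes u: "uninorm U" and w: "uninorm W" and Rc: "R = (\<le>) \<or> R = (\<lambda>a b. b \<le> a)"
    and pair: "\<forall>x1 x2 y1 y2 :: real. 0 \<le> x1 \<longrightarrow> x1 \<le> x2 \<longrightarrow> x2 \<le> 1 \<longrightarrow>
               0 \<le> y1 \<longrightarrow> y1 \<le> y2 \<longrightarrow> y2 \<le> 1 \<longrightarrow>
               R (U (W x1 y2) (W x2 y1)) (U (W x1 y1) (W x2 y2))"
    and bnd: "\<forall>i\<in>{1..n}. 0 \<le> x i \<and> x i \<le> 1 \<and> 0 \<le> y i \<and> y i \<le> 1"
    and ord: "\<forall>i\<in>{1..n}. \<forall>j\<in>{1..n}. i \<le> j \<longrightarrow> x i \<le> x j \<and> y i \<le> y j"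
  shows "\<sigma> permutes {1..n} \<Longrightarrow> R (VV U W e n x y \<sigma>) (VV U W e n x y id)"
proof (induction "card {k\<in>{1..n}. \<sigma> k \<noteq> k}" arbitrary: \<sigma> rule: less_induct)
  case less
  define D where "D = {k\<in>{1..n}. \<sigma> k \<noteq> k}"
  have fD: "finite D" unfolding D_def by simp
  show ?case
  proof (cases "D = {}")
    case True
    then have "VV U W e n x y \<sigma> = VV U W e n x y id"
      unfolding VV_def D_def by (intro arg_cong[where f="fold_mset _ _"] image_mset_cong) auto
    then show ?thesis using Rrefl[OF Rc] by simp
  next
    case False
    define i where "i = Min D"
    have iD: "i \<in> D" using False fD unfolding i_def by simp
    have imin: "\<And>k. k \<in> D \<Longrightarrow> i \<le> k" using fD unfolding i_def by simp
    have i1: "i \<in> {1..n}" "\<sigma> i \<noteq> i" using iD unfolding D_def by auto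
    have fixk: "\<And>k. k \<in> {1..n} \<Longrightarrow> k < i \<Longrightarrow> \<sigma> k = k"
      using imin unfolding D_def by force
    have sin: "\<sigma> i \<in> {1..n}" using permutes_in_image[OF less.prems] i1(1) by blast
    have inj: "inj \<sigma>" using less.prems by (rule permutes_inj)
    have si: "i < \<sigma> i"
    proof (rule ccontr)
      assume "\<not> i < \<sigma> i"
      then have "\<sigma> i < i" using i1 by simp
      then have "\<sigma> (\<sigma> i) = \<sigma> i" using fixk sin by blast
      then show False using inj i1 by (metis injD)
    qed
    define j where "j = inv \<sigma> i"
    have sj: "\<sigma> j = i" unfolding j_def using permutes_inverses(1)[OF less.prems] by simp
    have j1: "j \<in> {1..n}" unfolding j_def
      using permutes_in_image[OF permutes_inv[OF less.prems]] i1 by simp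
    have ij: "i < j"
    proof (rule ccontr)
      assume "\<not> i < j"
      moreover have "j \<noteq> i" using sj i1 by auto
      ultimately have "j < i" by simp
      then have "\<sigma> j = j" using fixk j1 by blast
      then show False using sj \<open>j \<noteq> i\<close> by simp
    qed
    define \<sigma>' where "\<sigma>' = \<sigma> \<circ> transpose i j"
    have p': "\<sigma>' permutes {1..n}" unfolding \<sigma>'_def
      by (rule permutes_compose[OF permutes_swap_id[OF i1(1) j1] less.prems])
    have s'i: "\<sigma>' i = i" unfolding \<sigma>'_def using sj by simp
    have s'j: "\<sigma>' j = \<sigma> i" unfolding \<sigma>'_def by simp
    have s'k: "\<And>k. k \<noteq> i \<Longrightarrow> k \<noteq> j \<Longrightarrow> \<sigma>' k = \<sigma> k" unfolding \<sigma>'_def by simp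
    have "{k\<in>{1..n}. \<sigma>' k \<noteq> k} \<subseteq> D - {i}"
    proof
      fix k assume k: "k \<in> {k\<in>{1..n}. \<sigma>' k \<noteq> k}"
      have "k \<noteq> i" using k s'i by auto
      moreover have "\<sigma> k \<noteq> k"
      proof (cases "k = j")
        case True then show ?thesis using sj ij by auto
      next
        case False then show ?thesis using k s'k[OF \<open>k \<noteq> i\<close> False] by auto
      qed
      ultimately show "k \<in> D - {i}" using k unfolding D_def by auto
    qed
    also have "\<dots> \<subset> D" using iD by blast
    finally have "card {k\<in>{1..n}. \<sigma>' k \<noteq> k} < card D" using fD by (rule psubset_card_mono[rotated])
    then have IH: "R (VV U W e n x y \<sigma>') (VV U W e n x y id)"
      using less.hyps p' unfolding D_def by blast
    have xs: "0 \<le> x i" "x i \<le> x (\<sigma> i)" "x (\<sigma> i) \<le> 1" "0 \<le> y i" "y i \<le> y j" "y j \<le> 1"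
      using bnd ord i1 sin j1 si ij by auto
    have "R (VV U W e n x y \<sigma>) (VV U W e n x y \<sigma>')"
      unfolding VV_def
      apply (rule exchange[OF u Rc _ i1(1) j1])
      using ij s'k s'i s'j sj pairlem[OF u w pair xs] by auto
    then show ?thesis using IH Rtrans[OF Rc] by blast
  qed
qed

lemma lower:
  assumes u: "uninorm U" and w: "uninorm W" and Rc: "R = (\<le>) \<or> R = (\<lambda>a b. b \<le> a)"
    and pair: "\<forall>x1 x2 y1 y2 :: real. 0 \<le> x1 \<longrightarrow> x1 \<le> x2 \<longrightarrow> x2 \<le> 1 \<longrightarrow>
               0 \<le> y1 \<longrightarrow> y1 \<le> y2 \<longrightarrow> y2 \<le> 1 \<longrightarrow>
               R (U (W x1 y2) (W x2 y1)) (U (W x1 y1) (W x2 y2))"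
    and bnd: "\<forall>i\<in>{1..n}. 0 \<le> x i \<and> x i \<le> 1 \<and> 0 \<le> y i \<and> y i \<le> 1"
    and ord: "\<forall>i\<in>{1..n}. \<forall>j\<in>{1..n}. i \<le> j \<longrightarrow> x i \<le> x j \<and> y i \<le> y j"
  shows "\<sigma> permutes {1..n} \<Longrightarrow> R (VV U W e n x y (\<lambda>k. n + 1 - k)) (VV U W e n x y \<sigma>)"
proof (induction "card {k\<in>{1..n}. \<sigma> k \<noteq> n + 1 - k}" arbitrary: \<sigma> rule: less_induct)
  case less
  define D where "D = {k\<in>{1..n}. \<sigma> k \<noteq> n + 1 - k}"
  have fD: "finite D" unfolding D_def by simp
  show ?case
  proof (cases "D = {}")
    case True
    then have "VV U W e n x y \<sigma> = VV U W e n x y (\<lambda>k. n + 1 - k)"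
      unfolding VV_def D_def by (intro arg_cong[where f="fold_mset _ _"] image_mset_cong) auto
    then show ?thesis using Rrefl[OF Rc] by simp
  next
    case False
    define i where "i = Min D"
    have iD: "i \<in> D" using False fD unfolding i_def by simp
    have imin: "\<And>k. k \<in> D \<Longrightarrow> i \<le> k" using fD unfolding i_def by simp
    have i1: "i \<in> {1..n}" "\<sigma> i \<noteq> n + 1 - i" using iD unfolding D_def by auto
    have fixk: "\<And>k. k \<in> {1..n} \<Longrightarrow> k < i \<Longrightarrow> \<sigma> k = n + 1 - k"
      using imin unfolding D_def by force
    have sin: "\<sigma> i \<in> {1..n}" using permutes_in_image[OF less.prems] i1(1) by blast
    have inj: "inj \<sigma>" using less.prems by (rule permutes_inj)
    have si: "\<sigma> i < n + 1 - i"
    proof (rule ccontr)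
      assume "\<not> \<sigma> i < n + 1 - i"
      then have gt: "\<sigma> i > n + 1 - i" using i1 by simp
      define k where "k = n + 1 - \<sigma> i"
      have k1: "k \<in> {1..n}" "k < i" using gt sin i1 unfolding k_def by auto
      then have "\<sigma> k = \<sigma> i" using fixk[OF k1] sin unfolding k_def by auto
      then have "k = i" using inj by (metis injD)
      then show False using k1 by simp
    qed
    define j where "j = inv \<sigma> (n + 1 - i)"
    have ni: "n + 1 - i \<in> {1..n}" using i1 by auto
    have sj: "\<sigma> j = n + 1 - i" unfolding j_def using permutes_inverses(1)[OF less.prems] by simp
    have j1: "j \<in> {1..n}" unfolding j_def
      using permutes_in_image[OF permutes_inv[OF less.prems]] ni by simp
    have ij: "i < j"
    proof (rule ccontr)
      assume "\<not> i < j"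
      moreover have "j \<noteq> i" using sj i1 by auto
      ultimately have "j < i" by simp
      then have "\<sigma> j = n + 1 - j" using fixk j1 by blast
      then show False using sj \<open>j \<noteq> i\<close> \<open>j < i\<close> i1 j1 by auto
    qed
    define \<sigma>' where "\<sigma>' = \<sigma> \<circ> transpose i j"
    have p': "\<sigma>' permutes {1..n}" unfolding \<sigma>'_def
      by (rule permutes_compose[OF permutes_swap_id[OF i1(1) j1] less.prems])
    have s'i: "\<sigma>' i = n + 1 - i" unfolding \<sigma>'_def using sj by simp
    have s'j: "\<sigma>' j = \<sigma> i" unfolding \<sigma>'_def by simp
    have s'k: "\<And>k. k \<noteq> i \<Longrightarrow> k \<noteq> j \<Longrightarrow> \<sigma>' k = \<sigma> k" unfolding \<sigma>'_def by simp
    have "{k\<in>{1..n}. \<sigma>' k \<noteq> n + 1 - k} \<subseteq> D - {i}"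
    proof
      fix k assume k: "k \<in> {k\<in>{1..n}. \<sigma>' k \<noteq> n + 1 - k}"
      have "k \<noteq> i" using k s'i by auto
      moreover have "\<sigma> k \<noteq> n + 1 - k"
      proof (cases "k = j")
        case True then show ?thesis using sj ij j1 i1 by auto
      next
        case False then show ?thesis using k s'k[OF \<open>k \<noteq> i\<close> False] by auto
      qed
      ultimately show "k \<in> D - {i}" using k unfolding D_def by auto
    qed
    also have "\<dots> \<subset> D" using iD by blast
    finally have "card {k\<in>{1..n}. \<sigma>' k \<noteq> n + 1 - k} < card D" using fD by (rule psubset_card_mono[rotated])
    then have IH: "R (VV U W e n x y (\<lambda>k. n + 1 - k)) (VV U W e n x y \<sigma>')"
      using less.hyps p' unfolding D_def by blast
    have xs: "0 \<le> x (\<sigma> i)" "x (\<sigma> i) \<le> x (n + 1 - i)" "x (n + 1 - i) \<le> 1" "0 \<le> y i" "y i \<le> y j" "y j \<le> 1"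
      using bnd ord i1 sin j1 si ij ni by auto
    have "R (VV U W e n x y \<sigma>') (VV U W e n x y \<sigma>)"
      unfolding VV_def
      apply (rule exchange[OF u Rc _ i1(1) j1])
      using ij s'k s'i s'j sj pairlem[OF u w pair xs] by auto
    then show ?thesis using IH Rtrans[OF Rc] by blast
  qed
qed

lemma iter_VV:
  assumes u: "uninorm U" and w: "uninorm W" and e: "e \<in> {0..1}" "\<forall>x\<in>{0..1}. U x e = x"
    and n: "n \<ge> 1"
    and bnd: "\<forall>i\<in>{1..n}. 0 \<le> x i \<and> x i \<le> 1 \<and> 0 \<le> y i \<and> y i \<le> 1"
    and p: "\<forall>i\<in>{1..n}. p i \<in> {1..n}"
  shows "iter_op U (\<lambda>i. W (x (p i)) (y i)) n = VV U W e n x y p"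
  unfolding VV_def
proof (rule iter_op_mset[OF u e n])
  show "\<forall>i\<in>{1..n}. W (x (p i)) (y i) \<in> {0..1}"
  proof
    fix i assume i: "i \<in> {1..n}"
    have "x (p i) \<in> {0..1}" "y i \<in> {0..1}" using bnd p i by auto
    then show "W (x (p i)) (y i) \<in> {0..1}" by (rule un_closed[OF w])
  qed
qed

lemma generic:
  assumes u: "uninorm U" and w: "uninorm W" and Rc: "R = (\<le>) \<or> R = (\<lambda>a b. b \<le> a)"
  shows "(\<forall>n::nat. \<forall>x y :: nat \<Rightarrow> real. \<forall>\<sigma>.
       n \<ge> 1 \<longrightarrow>
       (\<forall>i\<in>{1..n}. 0 \<le> x i \<and> x i \<le> 1 \<and> 0 \<le> y i \<and> y i \<le> 1) \<longrightarrow>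
       (\<forall>i\<in>{1..n}. \<forall>j\<in>{1..n}. i \<le> j \<longrightarrow> x i \<le> x j \<and> y i \<le> y j) \<longrightarrow>
       \<sigma> permutes {1..n} \<longrightarrow>
       R (iter_op U (\<lambda>i. W (x (n + 1 - i)) (y i)) n) (iter_op U (\<lambda>i. W (x (\<sigma> i)) (y i)) n) \<and>
       R (iter_op U (\<lambda>i. W (x (\<sigma> i)) (y i)) n) (iter_op U (\<lambda>i. W (x i) (y i)) n))
    \<longleftrightarrow> (\<forall>x1 x2 y1 y2 :: real. 0 \<le> x1 \<longrightarrow> x1 \<le> x2 \<longrightarrow> x2 \<le> 1 \<longrightarrow>
               0 \<le> y1 \<longrightarrow> y1 \<le> y2 \<longrightarrow> y2 \<le> 1 \<longrightarrow>
               R (U (W x1 y2) (W x2 y1)) (U (W x1 y1) (W x2 y2)))" (is "?L \<longleftrightarrow> ?P")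
proof
  assume L: ?L
  show ?P
  proof (intro allI impI)
    fix x1 x2 y1 y2 :: real
    assume h: "0 \<le> x1" "x1 \<le> x2" "x2 \<le> 1" "0 \<le> y1" "y1 \<le> y2" "y2 \<le> 1"
    define x where "x = (\<lambda>k::nat. if k \<le> 1 then x1 else x2)"
    define y where "y = (\<lambda>k::nat. if k \<le> 1 then y1 else y2)"
    have perm: "transpose (1::nat) 2 permutes {1..2}" by (rule permutes_swap_id) auto
    have "R (iter_op U (\<lambda>i. W (x (transpose 1 2 i)) (y i)) 2) (iter_op U (\<lambda>i. W (x i) (y i)) 2)"
      using L[rule_format, of 2 x y "transpose 1 2"] perm h unfolding x_def y_def by auto
    then have "R (U (W x2 y1) (W x1 y2)) (U (W x1 y1) (W x2 y2))"
      unfolding iter_op_def x_def y_def by (simp add: numeral_2_eq_2)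
    moreover have "W x2 y1 \<in> {0..1}" "W x1 y2 \<in> {0..1}"
    proof -
      have "x1 \<in> {0..1}" "x2 \<in> {0..1}" "y1 \<in> {0..1}" "y2 \<in> {0..1}" using h by auto
      then show "W x2 y1 \<in> {0..1}" "W x1 y2 \<in> {0..1}" using un_closed[OF w] by blast+
    qed
    ultimately show "R (U (W x1 y2) (W x2 y1)) (U (W x1 y1) (W x2 y2))"
      using un_comm[OF u] by metis
  qed
next
  assume P: ?P
  obtain e where e: "e \<in> {0..1}" "\<forall>x\<in>{0..1}. U x e = x" using u unfolding uninorm_def by blast
  show ?L
  proof (intro allI impI)
    fix n :: nat and x y :: "nat \<Rightarrow> real" and \<sigma>
    assume n: "n \<ge> 1"
      and bnd: "\<forall>i\<in>{1..n}. 0 \<le> x i \<and> x i \<le> 1 \<and> 0 \<le> y i \<and> y i \<le> 1"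
      and ord: "\<forall>i\<in>{1..n}. \<forall>j\<in>{1..n}. i \<le> j \<longrightarrow> x i \<le> x j \<and> y i \<le> y j"
      and \<sigma>: "\<sigma> permutes {1..n}"
    have e1: "iter_op U (\<lambda>i. W (x (n + 1 - i)) (y i)) n = VV U W e n x y (\<lambda>k. n + 1 - k)"
      by (rule iter_VV[OF u w e n bnd]) auto
    have e2: "iter_op U (\<lambda>i. W (x (\<sigma> i)) (y i)) n = VV U W e n x y \<sigma>"
      by (rule iter_VV[OF u w e n bnd]) (use permutes_in_image[OF \<sigma>] in blast)
    have e3: "iter_op U (\<lambda>i. W (x i) (y i)) n = VV U W e n x y id"
      using iter_VV[OF u w e n bnd, of id] by simp
    show "R (iter_op U (\<lambda>i. W (x (n + 1 - i)) (y i)) n) (iter_op U (\<lambda>i. W (x (\<sigma> i)) (y i)) n) \<and>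
       R (iter_op U (\<lambda>i. W (x (\<sigma> i)) (y i)) n) (iter_op U (\<lambda>i. W (x i) (y i)) n)"
      unfolding e1 e2 e3
      using lower[OF u w Rc P bnd ord \<sigma>] upper[OF u w Rc P bnd ord \<sigma>] by blast
  qed
qed

theorem theorem2:
  fixes T S :: "real \<Rightarrow> real \<Rightarrow> real"
  assumes "uninorm T" and "uninorm S"
  shows "(rearrangement_ineq T S \<longleftrightarrow>
            (\<forall>x1 x2 y1 y2 :: real. 0 \<le> x1 \<longrightarrow> x1 \<le> x2 \<longrightarrow> x2 \<le> 1 \<longrightarrow>
               0 \<le> y1 \<longrightarrow> y1 \<le> y2 \<longrightarrow> y2 \<le> 1 \<longrightarrow>
               S (T x1 y1) (T x2 y2) \<ge> S (T x1 y2) (T x2 y1)))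
       \<and> (dual_rearrangement_ineq T S \<longleftrightarrow>
            (\<forall>x1 x2 y1 y2 :: real. 0 \<le> x1 \<longrightarrow> x1 \<le> x2 \<longrightarrow> x2 \<le> 1 \<longrightarrow>
               0 \<le> y1 \<longrightarrow> y1 \<le> y2 \<longrightarrow> y2 \<le> 1 \<longrightarrow>
               T (S x1 y1) (S x2 y2) \<le> T (S x1 y2) (S x2 y1)))"
proof
  show "rearrangement_ineq T S \<longleftrightarrow>
            (\<forall>x1 x2 y1 y2 :: real. 0 \<le> x1 \<longrightarrow> x1 \<le> x2 \<longrightarrow> x2 \<le> 1 \<longrightarrow>
               0 \<le> y1 \<longrightarrow> y1 \<le> y2 \<longrightarrow> y2 \<le> 1 \<longrightarrow>
               S (T x1 y1) (T x2 y2) \<ge> S (T x1 y2) (T x2 y1))"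
    unfolding rearrangement_ineq_def
    using generic[OF assms(2) assms(1), of "(\<le>)"] by simp
  show "dual_rearrangement_ineq T S \<longleftrightarrow>
            (\<forall>x1 x2 y1 y2 :: real. 0 \<le> x1 \<longrightarrow> x1 \<le> x2 \<longrightarrow> x2 \<le> 1 \<longrightarrow>
               0 \<le> y1 \<longrightarrow> y1 \<le> y2 \<longrightarrow> y2 \<le> 1 \<longrightarrow>
               T (S x1 y1) (S x2 y2) \<le> T (S x1 y2) (S x2 y1))"
    unfolding dual_rearrangement_ineq_def
    using generic[OF assms(1) assms(2), of "\<lambda>a b. b \<le> a"] by simp
qed

end
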